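(* Let $(V,\{A,B\})$ be a forking problem with $n$ agents and a monotonic profile. Suppose there exist $k_1,k_2\in\{1,\dots,n\}$ with $k_1\le|V_A^*|$ and $k_2\le|V_B^*|$ such that every agent in $V_A^*$ is $k_1$-loyal (to $A$) and every agent in $V_B^*$ is $k_2$-loyal (to $B$). Then the profile admits a unique stable assignment.
   Context: Agents $V=\{v_1,\dots,v_n\}$; two alternatives $A,B$. Each agent $v_i$ has a strict total order $\succ_i$ on $\{A,B\}\times\{1,\dots,n\}$, where $(S,j)$ means being in the community adopting $S$ of size $j$; it is monotonic if $(S,j)\succ_i(S,k)$ whenever $k<j$. For $S\in\{A,B\}$ with $S'$ the other alternative, $V_S^*$ is the set of agents with $(S,n)\succ_i(S',n)$. Agent $v_i$ is $k$-loyal to $S$ if $v_i\in V_S^*$ and $(S,k)\succ_i(S',n)$. An assignment is a map $f:V\to\{A,B\}$; $v_i$ prefers $f$ to $g$ if $(f(v_i),|f^{-1}(f(v_i))|)\succ_i(g(v_i),|g^{-1}(g(v_i))|)$. An assignment $f$ is stable if there is no assignment $f'\neq f$ such that every agent $v_i$ with $f'(v_i)\neq f(v_i)$ prefers $f'$ to $f$. *)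

theory Defs
  imports Main
begin

datatype alt = A | B

fun other :: "alt \<Rightarrow> alt" where
  "other A = B" | "other B = A"

text \<open>A preference profile: for agent v, pref v x y means x is strictly preferred to y
  by v, where x, y range over {A,B} x {1..n}.\<close>

definition outcomes :: "nat \<Rightarrow> (alt \<times> nat) set" where
  "outcomes n = UNIV \<times> {1..n}"

definition strict_total_on :: "'a set \<Rightarrow> ('a \<Rightarrow> 'a \<Rightarrow> bool) \<Rightarrow> bool" where
  "strict_total_on D r \<longleftrightarrow>
     (\<forall>x\<in>D. \<not> r x x) \<and>
     (\<forall>x\<in>D. \<forall>y\<in>D. \<forall>z\<in>D. r x y \<longrightarrow> r y z \<longrightarrow> r x z) \<and>
     (\<forall>x\<in>D. \<forall>y\<in>D. x \<noteq> y \<longrightarrow> r x y \<or> r y x)"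

definition profile :: "'v set \<Rightarrow> ('v \<Rightarrow> alt \<times> nat \<Rightarrow> alt \<times> nat \<Rightarrow> bool) \<Rightarrow> bool" where
  "profile V pref \<longleftrightarrow> (\<forall>v\<in>V. strict_total_on (outcomes (card V)) (pref v))"

definition monotonic :: "'v set \<Rightarrow> ('v \<Rightarrow> alt \<times> nat \<Rightarrow> alt \<times> nat \<Rightarrow> bool) \<Rightarrow> bool" where
  "monotonic V pref \<longleftrightarrow>
     (\<forall>v\<in>V. \<forall>S. \<forall>j\<in>{1..card V}. \<forall>k\<in>{1..card V}. k < j \<longrightarrow> pref v (S, j) (S, k))"

definition Vstar :: "'v set \<Rightarrow> ('v \<Rightarrow> alt \<times> nat \<Rightarrow> alt \<times> nat \<Rightarrow> bool) \<Rightarrow> alt \<Rightarrow> 'v set" where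
  "Vstar V pref S = {v\<in>V. pref v (S, card V) (other S, card V)}"

definition loyal :: "'v set \<Rightarrow> ('v \<Rightarrow> alt \<times> nat \<Rightarrow> alt \<times> nat \<Rightarrow> bool) \<Rightarrow> nat \<Rightarrow> alt \<Rightarrow> 'v \<Rightarrow> bool" where
  "loyal V pref k S v \<longleftrightarrow> v \<in> Vstar V pref S \<and> pref v (S, k) (other S, card V)"

text \<open>Assignments V -> {A,B}, canonically represented (fixed value outside V).\<close>
definition assignment :: "'v set \<Rightarrow> ('v \<Rightarrow> alt) \<Rightarrow> bool" where
  "assignment V f \<longleftrightarrow> (\<forall>v. v \<notin> V \<longrightarrow> f v = undefined)"

definition outcome :: "'v set \<Rightarrow> ('v \<Rightarrow> alt) \<Rightarrow> 'v \<Rightarrow> alt \<times> nat" where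
  "outcome V f v = (f v, card {u\<in>V. f u = f v})"

definition prefers :: "'v set \<Rightarrow> ('v \<Rightarrow> alt \<times> nat \<Rightarrow> alt \<times> nat \<Rightarrow> bool) \<Rightarrow> 'v \<Rightarrow> ('v \<Rightarrow> alt) \<Rightarrow> ('v \<Rightarrow> alt) \<Rightarrow> bool" where
  "prefers V pref v f g \<longleftrightarrow> pref v (outcome V f v) (outcome V g v)"

definition stable :: "'v set \<Rightarrow> ('v \<Rightarrow> alt \<times> nat \<Rightarrow> alt \<times> nat \<Rightarrow> bool) \<Rightarrow> ('v \<Rightarrow> alt) \<Rightarrow> bool" where
  "stable V pref f \<longleftrightarrow> assignment V f \<and>
     \<not> (\<exists>f'. assignment V f' \<and> f' \<noteq> f \<and>
            (\<forall>v\<in>V. f' v \<noteq> f v \<longrightarrow> prefers V pref v f' f))"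

end

theory Submission
  imports Defs
begin

lemma asym:
  assumes "profile V pref" "v \<in> V" "x \<in> outcomes (card V)" "y \<in> outcomes (card V)"
    "pref v x y" "pref v y x"
  shows False
  using assms unfolding profile_def strict_total_on_def by blast

lemma key:
  assumes "finite V" "profile V pref" "monotonic V pref" "loyal V pref k S v"
    "k \<in> {1..card V}" "k \<le> a" "a \<le> card V" "1 \<le> m" "m \<le> card V"
  shows "pref v (S, a) (other S, m)"
proof -
  have v: "v \<in> V" using assms(4) unfolding loyal_def Vstar_def by auto
  have tr: "\<And>x y z. x \<in> outcomes (card V) \<Longrightarrow> y \<in> outcomes (card V) \<Longrightarrow> z \<in> outcomes (card V)
     \<Longrightarrow> pref v x y \<Longrightarrow> pref v y z \<Longrightarrow> pref v x z"
    using assms(2) v unfolding profile_def strict_total_on_def by blast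
  have l: "pref v (S, k) (other S, card V)" using assms(4) unfolding loyal_def by auto
  have o1: "(S,a) \<in> outcomes (card V)" "(S,k) \<in> outcomes (card V)"
    "(other S, card V) \<in> outcomes (card V)" "(other S, m) \<in> outcomes (card V)"
    using assms unfolding outcomes_def by auto
  have h1: "pref v (S, a) (other S, card V)"
  proof (cases "a = k")
    case False
    then have "pref v (S,a) (S,k)" using assms(3,5,6,7) v unfolding monotonic_def by auto
    then show ?thesis using tr[OF o1(1,2,3)] l by blast
  qed (use l in simp)
  show ?thesis
  proof (cases "m = card V")
    case False
    then have "pref v (other S, card V) (other S, m)" using assms(3,8,9) v unfolding monotonic_def by auto
    then show ?thesis using tr[OF o1(1,3,4)] h1 by blast
  qed (use h1 in simp)
qed

lemma card_range:
  assumes "finite V" "v \<in> V"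
  shows "1 \<le> card {u\<in>V. g u = g v}" "card {u\<in>V. g u = g v} \<le> card V"
proof -
  have "finite {u\<in>V. g u = g v}" using assms by auto
  moreover have "v \<in> {u\<in>V. g u = g v}" using assms by auto
  ultimately show "1 \<le> card {u\<in>V. g u = g v}" by (metis One_nat_def Suc_leI card_gt_0_iff empty_iff)
  show "card {u\<in>V. g u = g v} \<le> card V" using assms by (intro card_mono) auto
qed

theorem proposition1:
  fixes V :: "'v set" and pref :: "'v \<Rightarrow> alt \<times> nat \<Rightarrow> alt \<times> nat \<Rightarrow> bool"
    and k1 k2 :: nat
  assumes "finite V"
    and "profile V pref"
    and "monotonic V pref"
    and "k1 \<in> {1..card V}" and "k2 \<in> {1..card V}"
    and "k1 \<le> card (Vstar V pref A)" and "k2 \<le> card (Vstar V pref B)"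
    and "\<forall>v\<in>Vstar V pref A. loyal V pref k1 A v"
    and "\<forall>v\<in>Vstar V pref B. loyal V pref k2 B v"
  shows "\<exists>!f. stable V pref f"
proof -
  let ?n = "card V"
  define F where "F = (\<lambda>v. if v \<in> V then (if v \<in> Vstar V pref A then A else B) else undefined)"
  have aF: "assignment V F" unfolding assignment_def F_def by auto
  have n1: "1 \<le> ?n" using assms(4) by auto
  have inB: "v \<in> Vstar V pref B" if "v \<in> V" "v \<notin> Vstar V pref A" for v
  proof -
    have "(A, ?n) \<in> outcomes ?n" "(B, ?n) \<in> outcomes ?n" using n1 unfolding outcomes_def by auto
    then have "pref v (A,?n) (B,?n) \<or> pref v (B,?n) (A,?n)"
      using assms(2) that(1) unfolding profile_def strict_total_on_def by blast
    then show ?thesis using that unfolding Vstar_def by auto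
  qed
  have disj: "v \<notin> Vstar V pref A" if "v \<in> Vstar V pref B" for v
  proof
    assume "v \<in> Vstar V pref A"
    moreover have "(A, ?n) \<in> outcomes ?n" "(B, ?n) \<in> outcomes ?n" using n1 unfolding outcomes_def by auto
    ultimately show False using that asym[OF assms(2)] unfolding Vstar_def by auto
  qed
  have setA: "{u\<in>V. F u = A} = Vstar V pref A" unfolding F_def Vstar_def by auto
  have setB: "{u\<in>V. F u = B} \<supseteq> Vstar V pref B" unfolding F_def using disj
    by (auto simp: Vstar_def)
  have cardB: "k2 \<le> card {u\<in>V. F u = B}"
    proof -
    have "card (Vstar V pref B) \<le> card {u\<in>V. F u = B}"
      by (rule card_mono[OF _ setB]) (use assms(1) in auto)
    then show ?thesis using assms(7) by linarith
  qed
  have cardA: "card {u\<in>V. F u = A} \<le> ?n" "card {u\<in>V. F u = B} \<le> ?n"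
    using assms(1) by (auto intro: card_mono)
  have noimp: "\<not> prefers V pref v g F" if "v \<in> V" "g v \<noteq> F v" for g v
  proof
    assume p: "prefers V pref v g F"
    have m: "1 \<le> card {u\<in>V. g u = g v}" "card {u\<in>V. g u = g v} \<le> ?n"
      using card_range[OF assms(1) that(1)] by auto
    have oo: "(g v, card {u\<in>V. g u = g v}) \<in> outcomes ?n" using m unfolding outcomes_def by auto
    show False
    proof (cases "v \<in> Vstar V pref A")
      case True
      have F1: "F v = A" using True that(1) unfolding F_def by simp
      then have Fv: "F v = A" "g v = B" using that(2) by (metis alt.exhaust)+

      have "pref v (A, card {u\<in>V. F u = A}) (other A, card {u\<in>V. g u = g v})"
        using key[OF assms(1-3) _ assms(4), of A v "card {u\<in>V. F u = A}"] True assms(8) assms(6) setA cardA m by auto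
      moreover have "(A, card {u\<in>V. F u = A}) \<in> outcomes ?n"
        using True setA cardA assms(4,6) unfolding outcomes_def by auto
      ultimately show False using asym[OF assms(2) that(1)] p oo Fv
        unfolding prefers_def outcome_def by auto
    next
      case False
      then have vB: "v \<in> Vstar V pref B" using inB that by auto
      have F1: "F v = B" using False that(1) unfolding F_def by simp
      then have Fv: "F v = B" "g v = A" using that(2) by (metis alt.exhaust)+
      have "pref v (B, card {u\<in>V. F u = B}) (other B, card {u\<in>V. g u = g v})"
        using key[OF assms(1-3) _ assms(5), of B v "card {u\<in>V. F u = B}"] vB assms(9) cardB cardA m by auto
      moreover have "(B, card {u\<in>V. F u = B}) \<in> outcomes ?n"
        using cardB cardA assms(5) unfolding outcomes_def by auto
      ultimately show False using asym[OF assms(2) that(1)] p oo Fv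
        unfolding prefers_def outcome_def by auto
    qed
  qed
  have sF: "stable V pref F"
    unfolding stable_def
  proof (intro conjI aF notI)
    assume "\<exists>f'. assignment V f' \<and> f' \<noteq> F \<and> (\<forall>v\<in>V. f' v \<noteq> F v \<longrightarrow> prefers V pref v f' F)"
    then obtain g where g: "assignment V g" "g \<noteq> F" "\<forall>v\<in>V. g v \<noteq> F v \<longrightarrow> prefers V pref v g F" by blast
    then obtain v where "g v \<noteq> F v" by auto
    then have "v \<in> V" using g(1) aF unfolding assignment_def by metis
    then show False using g(3) noimp \<open>g v \<noteq> F v\<close> by blast
  qed
  have uniq: "f = F" if "stable V pref f" for f
  proof (rule ccontr)
    assume ne: "f \<noteq> F"
    have "\<forall>v\<in>V. F v \<noteq> f v \<longrightarrow> prefers V pref v F f"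
    proof (intro ballI impI)
      fix v assume v: "v \<in> V" "F v \<noteq> f v"
      have m: "1 \<le> card {u\<in>V. f u = f v}" "card {u\<in>V. f u = f v} \<le> ?n"
        using card_range[OF assms(1) v(1)] by auto
      show "prefers V pref v F f"
      proof (cases "v \<in> Vstar V pref A")
        case True
        have F1: "F v = A" using True v(1) unfolding F_def by simp
        then have Fv: "F v = A" "f v = B" using v(2) by (metis alt.exhaust)+
        have "pref v (A, card {u\<in>V. F u = A}) (other A, card {u\<in>V. f u = f v})"
          using key[OF assms(1-3) _ assms(4), of A v "card {u\<in>V. F u = A}"] True assms(8) assms(6) setA cardA m by auto
        then show ?thesis using Fv unfolding prefers_def outcome_def by auto
      next
        case False
        then have vB: "v \<in> Vstar V pref B" using inB v by auto
        have F1: "F v = B" using False v(1) unfolding F_def by simp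
        then have Fv: "F v = B" "f v = A" using v(2) by (metis alt.exhaust)+
        have "pref v (B, card {u\<in>V. F u = B}) (other B, card {u\<in>V. f u = f v})"
          using key[OF assms(1-3) _ assms(5), of B v "card {u\<in>V. F u = B}"] vB assms(9) cardB cardA m by auto
        then show ?thesis using Fv unfolding prefers_def outcome_def by auto
      qed
    qed
    then show False using that aF ne unfolding stable_def by auto
  qed
  show ?thesis using sF uniq by blast
qed

end
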